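(* Let $\Delta=(\mathcal{D},\delta)$ be a program over a clocked basic action theory $\mathcal{D}$, let $K\in\mathbb{N}$ be at least as large as every natural-number constant mentioned in $\mathcal{D}$, and let $\mathcal{T}_\Delta$ be the transition system constructed by Algorithm 2 (described in the context) on input $(\mathcal{D},\delta,K)$. Then $\mathcal{T}_\Delta$ has finitely many states.
   Context: Situation calculus setting: sorts action, situation, object and time (the real numbers); $S_0$ initial situation; $\mathit{do}(a,s)$ the successor situation; $\phi[\sigma]$ is the situation-suppressed formula $\phi$ with situation argument $\sigma$ restored. Fluents are relation or function symbols with last argument a situation and other arguments objects; finitely many fluents, a finite set $\mathcal{A}$ of action types ($A$ has $|A|$ object arguments), finite set $\mathcal{O}$ of object constants (unique names, domain closure). A formula is uniform in $s$ if it mentions no situation term other than $s$ and does not mention $\mathit{Poss}$. A BAT is $\mathcal{D} = \mathcal{D}_0 \cup \mathcal{D}_{poss} \cup \mathcal{D}_{ssa} \cup \mathcal{D}_{ca} \cup \mathcal{D}_{co} \cup \Sigma$ (initial description uniform in $S_0$ with complete information, precondition axioms, successor state axioms, domain closure and unique name axioms for actions and objects, foundational axioms). Clock comparison: $f(\vec x,s)\bowtie v$ or $v\bowtie v'$ ($f$ functional fluent, $v,v'\in\mathbb{N}$, $\bowtie\in\{<,\leq,=,\geq,>\}$). Clocked formula: every atomic subformula mentioning a time term is a clock comparison; time-independent: no time term. A BAT is clocked if there is a distinguished action type $\mathit{wait}(t)$ (others have no time argument) and: functional fluents take time values and are $0$ at $S_0$; each functional fluent has successor state axiom $f(\vec o,\mathit{do}(a,s))=y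 \equiv \exists t\,(a=\mathit{wait}(t)\wedge y=f(\vec o,s)+t) \vee (\neg\exists t\, a=\mathit{wait}(t)) \wedge (\phi_f(\vec o,a,s)\wedge y=0 \vee \neg\phi_f(\vec o,a,s)\wedge y=f(\vec o,s))$ with $\phi_f$ time-independent, uniform in $s$; relational successor state axioms and precondition axioms have clocked right-hand sides uniform in $s$; $\mathit{Poss}(\mathit{wait}(t),s)\equiv\top$. $\mathcal{C}$ is the set of ground situation-suppressed clock (functional fluent) terms; $\nu_\sigma(\omega)=\tau$ iff $\mathcal{D}\models\omega[\sigma]=\tau$; $\nu+\tau$ adds $\tau$ to every value. For $u,v\geq0$: $u\sim_K v$ iff both $>K$, or both $\leq K$ with equal floors and equal ceilings; $\mathrm{fract}(v)=v-\lfloor v\rfloor$ if $v\leq K$, else $0$. $\nu\cong_K\nu'$ iff $\nu(\omega)\sim_K\nu'(\omega)$ for all $\omega$ and $\mathrm{fract}(\nu(\omega))\leq\mathrm{fract}(\nu(\omega'))$ iff $\mathrm{fract}(\nu'(\omega))\leq\mathrm{fract}(\nu'(\omega'))$ for all $\omega,\omega'$. $\sigma_1\approx_{\mathcal{D}K}\sigma_2$ iff they entail the same ground relational fluent atoms and $\nu_{\sigma_1}\cong_K\nu_{\sigma_2}$; $[\sigma]_{\approx_{\mathcal{D}K}}$ is the class of $\sigma$. $\mathrm{TSuccs}(\nu,K)$ is a computable finite set of nonnegative reals such that for every $\tau\geq0$ there is $\tau'\in\mathrm{TSuccs}(\nu,K)$ with $\nu+\tau\cong_K\nu+\tau'$.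 Golog: program expressions $\delta ::= \alpha \mid \phi? \mid \delta;\delta \mid \delta|\delta \mid \pi x.\,\delta \mid \delta^* \mid \delta\|\delta$, where action terms are time-suppressed (the program contains $\mathit{wait}()$ without argument), tests test situation-suppressed clocked formulas, and $\pi x$ chooses an object. $\mathit{nil}:=\mathrm{True}?$. A program is $\Delta=(\mathcal{D},\delta)$. Transition semantics: $\mathrm{Trans}(A(\vec\rho),s,a,\delta',s')\equiv a=A(\vec\rho)\wedge\mathit{Poss}(a,s)\wedge\delta'=\mathit{nil}\wedge s'=\mathit{do}(a,s)$ for $A\neq\mathit{wait}$; $\mathrm{Trans}(\mathit{wait}(),s,a,\delta',s')\equiv\exists t.\,a=\mathit{wait}(t)\wedge\delta'=\mathit{nil}\wedge s'=\mathit{do}(a,s)$; $\mathrm{Trans}(\phi?,\dots)\equiv\mathrm{False}$; $\mathrm{Trans}(\delta_1;\delta_2,s,a,\delta',s')\equiv\exists\gamma(\delta'=(\gamma;\delta_2)\wedge\mathrm{Trans}(\delta_1,s,a,\gamma,s'))\vee\mathrm{Final}(\delta_1,s)\wedge\mathrm{Trans}(\delta_2,s,a,\delta',s')$; $\mathrm{Trans}(\delta_1|\delta_2,\dots)\equiv\mathrm{Trans}(\delta_1,\dots)\vee\mathrm{Trans}(\delta_2,\dots)$; $\mathrm{Trans}(\pi x.\delta,s,a,\delta',s')\equiv\exists v.\,\mathrm{Trans}(\delta^x_v,s,a,\delta',s')$; $\mathrm{Trans}(\delta^*,s,a,\delta',s')\equiv\exists\gamma(\delta'=(\gamma;\delta^*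 )\wedge\mathrm{Trans}(\delta,s,a,\gamma,s'))$; $\mathrm{Trans}(\delta_1\|\delta_2,s,a,\delta',s')\equiv\exists\gamma(\delta'=(\gamma\|\delta_2)\wedge\mathrm{Trans}(\delta_1,s,a,\gamma,s'))\vee\exists\gamma(\delta'=(\delta_1\|\gamma)\wedge\mathrm{Trans}(\delta_2,s,a,\gamma,s'))$. $\mathrm{Final}(\alpha,s)\equiv\mathrm{False}$; $\mathrm{Final}(\phi?,s)\equiv\phi[s]$; $\mathrm{Final}(\delta_1;\delta_2,s)\equiv\mathrm{Final}(\delta_1,s)\wedge\mathrm{Final}(\delta_2,s)$; $\mathrm{Final}(\delta_1|\delta_2,s)\equiv\mathrm{Final}(\delta_1,s)\vee\mathrm{Final}(\delta_2,s)$; $\mathrm{Final}(\pi x.\delta,s)\equiv\exists v.\,\mathrm{Final}(\delta^x_v,s)$; $\mathrm{Final}(\delta^*,s)\equiv\mathrm{True}$; $\mathrm{Final}(\delta_1\|\delta_2,s)\equiv\mathrm{Final}(\delta_1,s)\wedge\mathrm{Final}(\delta_2,s)$. Algorithm 2 (input $\mathcal{D},\delta_0,K$): set $\mathit{Open}:=\{(S_0,\delta_0)\}$, $V:=\emptyset$, $E:=\emptyset$. While $\mathit{Open}\neq\emptyset$: remove some $(\sigma,\delta)$ from $\mathit{Open}$; let $\mathit{Acts}:=\{A(\vec\rho)\mid A\in\mathcal{A}\setminus\{\mathit{wait}\},\vec\rho\in\mathcal{O}^{|A|}\}\cup\{\mathit{wait}(\tau)\mid\tau\in\mathrm{TSuccs}(\nu_\sigma,K)\}$;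 for each $\alpha\in\mathit{Acts}$ and each $(\delta',\sigma')$ with $\mathcal{D}\models\mathrm{Trans}(\delta,\sigma,\alpha,\delta',\sigma')$: if $([\sigma']_{\approx_{\mathcal{D}K}},\delta')\notin V$, add it to $V$ and add $(\sigma',\delta')$ to $\mathit{Open}$; add the edge $(([\sigma]_{\approx_{\mathcal{D}K}},\delta),([\sigma']_{\approx_{\mathcal{D}K}},\delta'))$ to $E$. Return $(V,([S_0]_{\approx_{\mathcal{D}K}},\delta_0),E)$; its states are the elements of $V$ together with the initial state. *)

theory Defs
  imports Main "HOL.Real"
begin

section \<open>Syntax: object terms and clocked formulas (situation-suppressed)\<close>

text \<open>Object constants are the elements of a finite type 'o (domain closure and
unique names for objects are thereby built in).  Object variables are natural numbers.\<close>

datatype 'o otrm = Var nat | Obj 'o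

datatype cmp = CLt | CLe | CEq | CGe | CGt

text \<open>Clocked formulas over relational fluents 'f and functional (clock) fluents 'g.
 Atoms mentioning time terms are exactly clock comparisons  f(x) cmp v  and  v cmp v'
 with natural number constants v, v'.\<close>

datatype ('o,'f,'g) cform =
    TT
  | RAtom 'f "'o otrm list"
  | EqO "'o otrm" "'o otrm"
  | Clk 'g "'o otrm list" cmp nat
  | NatCmp cmp nat nat
  | Neg "('o,'f,'g) cform"
  | Conj "('o,'f,'g) cform" "('o,'f,'g) cform"
  | Ex nat "('o,'f,'g) cform"

fun cmp_sem :: "cmp \<Rightarrow> real \<Rightarrow> real \<Rightarrow> bool" where
  "cmp_sem CLt x y = (x < y)"
| "cmp_sem CLe x y = (x \<le> y)"
| "cmp_sem CEq x y = (x = y)"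
| "cmp_sem CGe x y = (x \<ge> y)"
| "cmp_sem CGt x y = (x > y)"

fun fv_trm :: "'o otrm \<Rightarrow> nat set" where
  "fv_trm (Var x) = {x}"
| "fv_trm (Obj _) = {}"

fun fv :: "('o,'f,'g) cform \<Rightarrow> nat set" where
  "fv TT = {}"
| "fv (RAtom F ts) = \<Union>(fv_trm ` set ts)"
| "fv (EqO t1 t2) = fv_trm t1 \<union> fv_trm t2"
| "fv (Clk g ts c v) = \<Union>(fv_trm ` set ts)"
| "fv (NatCmp c v w) = {}"
| "fv (Neg p) = fv p"
| "fv (Conj p q) = fv p \<union> fv q"
| "fv (Ex x p) = fv p - {x}"

fun time_indep :: "('o,'f,'g) cform \<Rightarrow> bool" where
  "time_indep (Clk g ts c v) = False"
| "time_indep (NatCmp c v w) = False"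
| "time_indep (Neg p) = time_indep p"
| "time_indep (Conj p q) = (time_indep p \<and> time_indep q)"
| "time_indep (Ex x p) = time_indep p"
| "time_indep _ = True"

fun nat_consts :: "('o,'f,'g) cform \<Rightarrow> nat set" where
  "nat_consts (Clk g ts c v) = {v}"
| "nat_consts (NatCmp c v w) = {v, w}"
| "nat_consts (Neg p) = nat_consts p"
| "nat_consts (Conj p q) = nat_consts p \<union> nat_consts q"
| "nat_consts (Ex x p) = nat_consts p"
| "nat_consts _ = {}"

fun subst_trm :: "nat \<Rightarrow> 'o \<Rightarrow> 'o otrm \<Rightarrow> 'o otrm" where
  "subst_trm x ob (Var y) = (if x = y then Obj ob else Var y)"
| "subst_trm x ob (Obj c) = Obj c"

fun subst :: "nat \<Rightarrow> 'o \<Rightarrow> ('o,'f,'g) cform \<Rightarrow> ('o,'f,'g) cform" where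
  "subst x ob TT = TT"
| "subst x ob (RAtom F ts) = RAtom F (map (subst_trm x ob) ts)"
| "subst x ob (EqO t1 t2) = EqO (subst_trm x ob t1) (subst_trm x ob t2)"
| "subst x ob (Clk g ts c v) = Clk g (map (subst_trm x ob) ts) c v"
| "subst x ob (NatCmp c v w) = NatCmp c v w"
| "subst x ob (Neg p) = Neg (subst x ob p)"
| "subst x ob (Conj p q) = Conj (subst x ob p) (subst x ob q)"
| "subst x ob (Ex y p) = (if x = y then Ex y p else Ex y (subst x ob p))"

section \<open>States (interpretation of the fluents in a situation) and evaluation\<close>

record ('o,'f,'g) fstate =
  frel :: "'f \<Rightarrow> 'o list \<Rightarrow> bool"
  fclk :: "'g \<Rightarrow> 'o list \<Rightarrow> real"

fun teval :: "(nat \<Rightarrow> 'o) \<Rightarrow> 'o otrm \<Rightarrow> 'o" where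
  "teval env (Var x) = env x"
| "teval env (Obj c) = c"

fun eval :: "('o,'f,'g) fstate \<Rightarrow> (nat \<Rightarrow> 'o) \<Rightarrow> ('o,'f,'g) cform \<Rightarrow> bool" where
  "eval st env TT = True"
| "eval st env (RAtom F ts) = frel st F (map (teval env) ts)"
| "eval st env (EqO t1 t2) = (teval env t1 = teval env t2)"
| "eval st env (Clk g ts c v) = cmp_sem c (fclk st g (map (teval env) ts)) (real v)"
| "eval st env (NatCmp c v w) = cmp_sem c (real v) (real w)"
| "eval st env (Neg p) = (\<not> eval st env p)"
| "eval st env (Conj p q) = (eval st env p \<and> eval st env q)"
| "eval st env (Ex x p) = (\<exists>ob. eval st (env(x := ob)) p)"

section \<open>Clocked basic action theories\<close>

text \<open>Actions: the non-wait action types 'a (finitely many, with arities) and wait(t).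
 Situations are represented by the list of actions performed, most recent first:
 S0 = [] and do(a,s) = a # s.\<close>

datatype ('o,'a) action = Act 'a "'o list" | Wait real

type_synonym ('o,'a) sit = "('o,'a) action list"

text \<open>A BAT, given by its components (successor state axioms and precondition axioms in
 normal form, split by action type):
 \<^item> init F os: truth value of F(os,S0) (complete initial information; clocks are 0 at S0);
 \<^item> poss A: right-hand side Pi_A(y_0..y_{m-1}) of Poss(A(y),s) (variables 0..m-1);
 \<^item> ssa F (Some A): right-hand side of F(x,do(A(y),s)), variables 0..n-1 for x, n..n+m-1 for y;
   ssa F None: right-hand side for the action wait(t) (cannot mention t, being clocked);
 \<^item> reset g A: the condition phi_g(x, A(y), s) resetting clock g (time-independent);
   for wait(t) every clock advances by t, and Poss(wait(t),s) is True.\<close>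

record ('o,'f,'g,'a) bat =
  rarity :: "'f \<Rightarrow> nat"
  farity :: "'g \<Rightarrow> nat"
  aarity :: "'a \<Rightarrow> nat"
  init   :: "'f \<Rightarrow> 'o list \<Rightarrow> bool"
  poss   :: "'a \<Rightarrow> ('o,'f,'g) cform"
  ssa    :: "'f \<Rightarrow> 'a option \<Rightarrow> ('o,'f,'g) cform"
  reset  :: "'g \<Rightarrow> 'a \<Rightarrow> ('o,'f,'g) cform"

fun arity_ok :: "('o,'f,'g,'a) bat \<Rightarrow> ('o,'f,'g) cform \<Rightarrow> bool" where
  "arity_ok D (RAtom F ts) = (length ts = rarity D F)"
| "arity_ok D (Clk g ts c v) = (length ts = farity D g)"
| "arity_ok D (Neg p) = arity_ok D p"
| "arity_ok D (Conj p q) = (arity_ok D p \<and> arity_ok D q)"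
| "arity_ok D (Ex x p) = arity_ok D p"
| "arity_ok D _ = True"

definition wf_form :: "('o,'f,'g,'a) bat \<Rightarrow> nat \<Rightarrow> ('o,'f,'g) cform \<Rightarrow> bool" where
  "wf_form D n p \<longleftrightarrow> fv p \<subseteq> {..<n} \<and> arity_ok D p"

definition clocked_bat :: "('o,'f,'g,'a) bat \<Rightarrow> bool" where
  "clocked_bat D \<longleftrightarrow>
     (\<forall>A. wf_form D (aarity D A) (poss D A)) \<and>
     (\<forall>F. wf_form D (rarity D F) (ssa D F None)) \<and>
     (\<forall>F A. wf_form D (rarity D F + aarity D A) (ssa D F (Some A))) \<and>
     (\<forall>g A. wf_form D (farity D g + aarity D A) (reset D g A) \<and> time_indep (reset D g A))"

definition bat_consts :: "('o,'f,'g,'a) bat \<Rightarrow> nat set" where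
  "bat_consts D = (\<Union>A. nat_consts (poss D A)) \<union> (\<Union>F a. nat_consts (ssa D F a))
                  \<union> (\<Union>g A. nat_consts (reset D g A))"

text \<open>The fluent values in a situation, as determined by D (D0 is complete, so this is the
 unique interpretation entailed by D).\<close>
primrec state_of :: "('o,'f,'g,'a) bat \<Rightarrow> ('o,'a) sit \<Rightarrow> ('o,'f,'g) fstate" where
  "state_of D [] = \<lparr>frel = init D, fclk = (\<lambda>g os. 0)\<rparr>"
| "state_of D (a # s) =
     (let st = state_of D s in
      case a of
        Wait t \<Rightarrow> \<lparr>frel = (\<lambda>F os. eval st (\<lambda>i. os ! i) (ssa D F None)),
                  fclk = (\<lambda>g os. fclk st g os + t)\<rparr>
      | Act A ys \<Rightarrow> \<lparr>frel = (\<lambda>F os. eval st (\<lambda>i. (os @ ys) ! i) (ssa D F (Some A))),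
                  fclk = (\<lambda>g os. if eval st (\<lambda>i. (os @ ys) ! i) (reset D g A) then 0
                                  else fclk st g os)\<rparr>)"

definition Poss :: "('o,'f,'g,'a) bat \<Rightarrow> ('o,'a) action \<Rightarrow> ('o,'a) sit \<Rightarrow> bool" where
  "Poss D a s = (case a of Wait t \<Rightarrow> True
                   | Act A os \<Rightarrow> eval (state_of D s) (\<lambda>i. os ! i) (poss D A))"

definition holds :: "('o,'f,'g,'a) bat \<Rightarrow> ('o,'a) sit \<Rightarrow> ('o,'f,'g) cform \<Rightarrow> bool" where
  "holds D s p \<longleftrightarrow> (\<forall>env. eval (state_of D s) env p)"

section \<open>Clock valuations and the region equivalence\<close>

definition clock_terms :: "('o,'f,'g,'a) bat \<Rightarrow> ('g \<times> 'o list) set" where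
  "clock_terms D = {(g, os). length os = farity D g}"

definition val :: "('o,'f,'g,'a) bat \<Rightarrow> ('o,'a) sit \<Rightarrow> ('g \<times> 'o list \<Rightarrow> real)" where
  "val D s = (\<lambda>(g, os). fclk (state_of D s) g os)"

definition simK :: "nat \<Rightarrow> real \<Rightarrow> real \<Rightarrow> bool" where
  "simK K u v \<longleftrightarrow> (u > real K \<and> v > real K) \<or>
      (u \<le> real K \<and> v \<le> real K \<and> \<lfloor>u\<rfloor> = \<lfloor>v\<rfloor> \<and> \<lceil>u\<rceil> = \<lceil>v\<rceil>)"

definition fractK :: "nat \<Rightarrow> real \<Rightarrow> real" where
  "fractK K v = (if v \<le> real K then v - of_int \<lfloor>v\<rfloor> else 0)"

definition region_eq :: "('g \<times> 'o list) set \<Rightarrow> nat \<Rightarrow> ('g \<times> 'o list \<Rightarrow> real)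
                          \<Rightarrow> ('g \<times> 'o list \<Rightarrow> real) \<Rightarrow> bool" where
  "region_eq C K \<nu> \<nu>' \<longleftrightarrow>
     (\<forall>w\<in>C. simK K (\<nu> w) (\<nu>' w)) \<and>
     (\<forall>w\<in>C. \<forall>w'\<in>C. (fractK K (\<nu> w) \<le> fractK K (\<nu> w')) \<longleftrightarrow> (fractK K (\<nu>' w) \<le> fractK K (\<nu>' w')))"

definition sit_equiv :: "('o,'f,'g,'a) bat \<Rightarrow> nat \<Rightarrow> ('o,'a) sit \<Rightarrow> ('o,'a) sit \<Rightarrow> bool" where
  "sit_equiv D K s1 s2 \<longleftrightarrow>
     (\<forall>F os. length os = rarity D F \<longrightarrow> frel (state_of D s1) F os = frel (state_of D s2) F os) \<and>
     region_eq (clock_terms D) K (val D s1) (val D s2)"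

definition sclass :: "('o,'f,'g,'a) bat \<Rightarrow> nat \<Rightarrow> ('o,'a) sit \<Rightarrow> ('o,'a) sit set" where
  "sclass D K s = {s'. sit_equiv D K s s'}"

definition tsuccs_ok :: "('o,'f,'g,'a) bat \<Rightarrow> nat \<Rightarrow>
                          (('g \<times> 'o list \<Rightarrow> real) \<Rightarrow> nat \<Rightarrow> real set) \<Rightarrow> bool" where
  "tsuccs_ok D K TS \<longleftrightarrow>
     (\<forall>\<nu>. (\<forall>w\<in>clock_terms D. \<nu> w \<ge> 0) \<longrightarrow>
        finite (TS \<nu> K) \<and> (\<forall>\<tau>\<in>TS \<nu> K. \<tau> \<ge> 0) \<and>
        (\<forall>\<tau>\<ge>0. \<exists>\<tau>'\<in>TS \<nu> K. region_eq (clock_terms D) K (\<lambda>w. \<nu> w + \<tau>) (\<lambda>w. \<nu> w + \<tau>')))"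

datatype ('o,'f,'g,'a) prog =
    PAct 'a "'o otrm list"
  | PWait
  | PTest "('o,'f,'g) cform"
  | PSeq "('o,'f,'g,'a) prog" "('o,'f,'g,'a) prog"
  | PChoice "('o,'f,'g,'a) prog" "('o,'f,'g,'a) prog"
  | PPi nat "('o,'f,'g,'a) prog"
  | PStar "('o,'f,'g,'a) prog"
  | PConc "('o,'f,'g,'a) prog" "('o,'f,'g,'a) prog"

definition pnil :: "('o,'f,'g,'a) prog" where
  "pnil = PTest TT"

fun psubst :: "nat \<Rightarrow> 'o \<Rightarrow> ('o,'f,'g,'a) prog \<Rightarrow> ('o,'f,'g,'a) prog" where
  "psubst x ob (PAct A ts) = PAct A (map (subst_trm x ob) ts)"
| "psubst x ob PWait = PWait"
| "psubst x ob (PTest p) = PTest (subst x ob p)"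
| "psubst x ob (PSeq d1 d2) = PSeq (psubst x ob d1) (psubst x ob d2)"
| "psubst x ob (PChoice d1 d2) = PChoice (psubst x ob d1) (psubst x ob d2)"
| "psubst x ob (PPi y d) = (if x = y then PPi y d else PPi y (psubst x ob d))"
| "psubst x ob (PStar d) = PStar (psubst x ob d)"
| "psubst x ob (PConc d1 d2) = PConc (psubst x ob d1) (psubst x ob d2)"

fun pfv :: "('o,'f,'g,'a) prog \<Rightarrow> nat set" where
  "pfv (PAct A ts) = \<Union>(fv_trm ` set ts)"
| "pfv PWait = {}"
| "pfv (PTest p) = fv p"
| "pfv (PSeq d1 d2) = pfv d1 \<union> pfv d2"
| "pfv (PChoice d1 d2) = pfv d1 \<union> pfv d2"
| "pfv (PPi y d) = pfv d - {y}"
| "pfv (PStar d) = pfv d"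
| "pfv (PConc d1 d2) = pfv d1 \<union> pfv d2"

fun parity_ok :: "('o,'f,'g,'a) bat \<Rightarrow> ('o,'f,'g,'a) prog \<Rightarrow> bool" where
  "parity_ok D (PAct A ts) = (length ts = aarity D A)"
| "parity_ok D PWait = True"
| "parity_ok D (PTest p) = arity_ok D p"
| "parity_ok D (PSeq d1 d2) = (parity_ok D d1 \<and> parity_ok D d2)"
| "parity_ok D (PChoice d1 d2) = (parity_ok D d1 \<and> parity_ok D d2)"
| "parity_ok D (PPi y d) = parity_ok D d"
| "parity_ok D (PStar d) = parity_ok D d"
| "parity_ok D (PConc d1 d2) = (parity_ok D d1 \<and> parity_ok D d2)"

definition wf_prog :: "('o,'f,'g,'a) bat \<Rightarrow> ('o,'f,'g,'a) prog \<Rightarrow> bool" where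
  "wf_prog D d \<longleftrightarrow> pfv d = {} \<and> parity_ok D d"

inductive Final :: "('o,'f,'g,'a) bat \<Rightarrow> ('o,'f,'g,'a) prog \<Rightarrow> ('o,'a) sit \<Rightarrow> bool"
  for D where
  "holds D s p \<Longrightarrow> Final D (PTest p) s"
| "Final D d1 s \<Longrightarrow> Final D d2 s \<Longrightarrow> Final D (PSeq d1 d2) s"
| "Final D d1 s \<Longrightarrow> Final D (PChoice d1 d2) s"
| "Final D d2 s \<Longrightarrow> Final D (PChoice d1 d2) s"
| "Final D (psubst x v d) s \<Longrightarrow> Final D (PPi x d) s"
| "Final D (PStar d) s"
| "Final D d1 s \<Longrightarrow> Final D d2 s \<Longrightarrow> Final D (PConc d1 d2) s"

inductive Trans :: "('o,'f,'g,'a) bat \<Rightarrow> ('o,'f,'g,'a) prog \<Rightarrow> ('o,'a) sit \<Rightarrow> ('o,'a) action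
                     \<Rightarrow> ('o,'f,'g,'a) prog \<Rightarrow> ('o,'a) sit \<Rightarrow> bool"
  for D where
  "Poss D (Act A os) s \<Longrightarrow> Trans D (PAct A (map Obj os)) s (Act A os) pnil (Act A os # s)"
| "Trans D PWait s (Wait t) pnil (Wait t # s)"
| "Trans D d1 s a g s' \<Longrightarrow> Trans D (PSeq d1 d2) s a (PSeq g d2) s'"
| "Final D d1 s \<Longrightarrow> Trans D d2 s a d' s' \<Longrightarrow> Trans D (PSeq d1 d2) s a d' s'"
| "Trans D d1 s a d' s' \<Longrightarrow> Trans D (PChoice d1 d2) s a d' s'"
| "Trans D d2 s a d' s' \<Longrightarrow> Trans D (PChoice d1 d2) s a d' s'"
| "Trans D (psubst x v d) s a d' s' \<Longrightarrow> Trans D (PPi x d) s a d' s'"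
| "Trans D d s a g s' \<Longrightarrow> Trans D (PStar d) s a (PSeq g (PStar d)) s'"
| "Trans D d1 s a g s' \<Longrightarrow> Trans D (PConc d1 d2) s a (PConc g d2) s'"
| "Trans D d2 s a g s' \<Longrightarrow> Trans D (PConc d1 d2) s a (PConc d1 g) s'"

section \<open>Algorithm 2\<close>

type_synonym ('o,'f,'g,'a) tstate = "('o,'a) sit set \<times> ('o,'f,'g,'a) prog"

type_synonym ('o,'f,'g,'a) config =
  "(('o,'a) sit \<times> ('o,'f,'g,'a) prog) set \<times> ('o,'f,'g,'a) tstate set
   \<times> (('o,'f,'g,'a) tstate \<times> ('o,'f,'g,'a) tstate) set"

definition Acts :: "('o,'f,'g,'a) bat \<Rightarrow> nat \<Rightarrow> (('g \<times> 'o list \<Rightarrow> real) \<Rightarrow> nat \<Rightarrow> real set)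
                    \<Rightarrow> ('o,'a) sit \<Rightarrow> ('o,'a) action set" where
  "Acts D K TS s = {Act A os | A os. length os = aarity D A} \<union> {Wait \<tau> | \<tau>. \<tau> \<in> TS (val D s) K}"

definition Succs :: "('o,'f,'g,'a) bat \<Rightarrow> nat \<Rightarrow> (('g \<times> 'o list \<Rightarrow> real) \<Rightarrow> nat \<Rightarrow> real set)
                    \<Rightarrow> ('o,'a) sit \<Rightarrow> ('o,'f,'g,'a) prog \<Rightarrow> (('o,'a) sit \<times> ('o,'f,'g,'a) prog) set" where
  "Succs D K TS s d = {(s', d'). \<exists>\<alpha>\<in>Acts D K TS s. Trans D d s \<alpha> d' s'}"

definition absq :: "('o,'f,'g,'a) bat \<Rightarrow> nat \<Rightarrow> ('o,'a) sit \<times> ('o,'f,'g,'a) prog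
                    \<Rightarrow> ('o,'f,'g,'a) tstate" where
  "absq D K = (\<lambda>(s, d). (sclass D K s, d))"

text \<open>One iteration of the while loop: some (s,d) is removed from Open; for every successor
 (s',d') (over all alpha in Acts) whose abstract state is not yet in V, the abstract state is
 added to V and ONE representative (the first one met by the inner loop, hence the set R of
 representatives, injective on abstract states) is added to Open; all edges are added to E.\<close>
definition alg_step :: "('o,'f,'g,'a) bat \<Rightarrow> nat \<Rightarrow> (('g \<times> 'o list \<Rightarrow> real) \<Rightarrow> nat \<Rightarrow> real set)
                        \<Rightarrow> ('o,'f,'g,'a) config \<Rightarrow> ('o,'f,'g,'a) config \<Rightarrow> bool" where
  "alg_step D K TS c c' \<longleftrightarrow>
     (case c of (Op, V, E) \<Rightarrow> case c' of (Op', V', E') \<Rightarrow>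
       (\<exists>s d R. (s, d) \<in> Op \<and>
          R \<subseteq> Succs D K TS s d \<and>
          inj_on (absq D K) R \<and>
          absq D K ` R = absq D K ` Succs D K TS s d - V \<and>
          Op' = (Op - {(s, d)}) \<union> R \<and>
          V' = V \<union> absq D K ` R \<and>
          E' = E \<union> {(absq D K (s, d), absq D K p) | p. p \<in> Succs D K TS s d}))"

definition init_config :: "('o,'f,'g,'a) prog \<Rightarrow> ('o,'f,'g,'a) config" where
  "init_config d0 = ({([], d0)}, {}, {})"

text \<open>All states of the transition system(s) produced by (any run of) Algorithm 2:
 the initial state together with every element ever put into V.\<close>
definition alg_states :: "('o,'f,'g,'a) bat \<Rightarrow> nat \<Rightarrow> (('g \<times> 'o list \<Rightarrow> real) \<Rightarrow> nat \<Rightarrow> real set)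
                          \<Rightarrow> ('o,'f,'g,'a) prog \<Rightarrow> ('o,'f,'g,'a) tstate set" where
  "alg_states D K TS d0 =
     insert (sclass D K [], d0)
       (\<Union>{V | Op V E. (alg_step D K TS)\<^sup>*\<^sup>* (init_config d0) (Op, V, E)})"

end

theory Submission
  imports Defs "HOL-Library.FuncSet"
begin

fun psize :: "('o,'f,'g,'a) prog \<Rightarrow> nat" where
  "psize (PSeq a b) = psize a + psize b + 1"
| "psize (PChoice a b) = psize a + psize b + 1"
| "psize (PConc a b) = psize a + psize b + 1"
| "psize (PPi x a) = psize a + 1"
| "psize (PStar a) = psize a + 1"
| "psize _ = 1"

lemma psize_psubst[simp]: "psize (psubst x v d) = psize d"
  by (induction d) auto

function reachp :: "('o::finite,'f,'g,'a) prog \<Rightarrow> ('o,'f,'g,'a) prog set" where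
  "reachp (PAct A ts) = {PAct A ts, pnil}"
| "reachp PWait = {PWait, pnil}"
| "reachp (PTest p) = {PTest p}"
| "reachp (PSeq d1 d2) = {PSeq g d2 | g. g \<in> reachp d1} \<union> reachp d2"
| "reachp (PChoice d1 d2) = {PChoice d1 d2} \<union> reachp d1 \<union> reachp d2"
| "reachp (PPi x d) = {PPi x d} \<union> (\<Union>v. reachp (psubst x v d))"
| "reachp (PStar d) = {PStar d} \<union> {PSeq g (PStar d) | g. g \<in> reachp d}"
| "reachp (PConc d1 d2) = {PConc g1 g2 | g1 g2. g1 \<in> reachp d1 \<and> g2 \<in> reachp d2}"
  by pat_completeness auto
termination by (relation "measure psize") auto

lemma reachp_finite: "finite (reachp d)"
proof (induction d rule: reachp.induct)
  case (4 d1 d2)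
  have "{PSeq g d2 | g. g \<in> reachp d1} = (\<lambda>g. PSeq g d2) ` reachp d1" by auto
  then show ?case using 4 by simp
next
  case (7 d)
  have "{PSeq g (PStar d) | g. g \<in> reachp d} = (\<lambda>g. PSeq g (PStar d)) ` reachp d" by auto
  then show ?case using 7 by simp
next
  case (8 d1 d2)
  have "{PConc g1 g2 | g1 g2. g1 \<in> reachp d1 \<and> g2 \<in> reachp d2}
        = (\<lambda>(g1,g2). PConc g1 g2) ` (reachp d1 \<times> reachp d2)" by auto
  then show ?case using 8 by simp
qed auto

lemma reachp_self: "d \<in> reachp d"
  by (induction d rule: reachp.induct) auto

lemma pnil_reachp[simp]: "reachp pnil = {pnil}"
  by (simp add: pnil_def)

lemma Trans_reachp: "Trans D d s a d' s' \<Longrightarrow> reachp d' \<subseteq> reachp d \<and> s' = a # s"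
  by (induction rule: Trans.induct) auto

definition NN :: "('o,'f,'g,'a) bat \<Rightarrow> ('o,'a) sit set" where
  "NN D = {s. \<forall>g os. fclk (state_of D s) g os \<ge> 0}"

lemma succ_NN:
  assumes "s \<in> NN D" "tsuccs_ok D K TS" "\<alpha> \<in> Acts D K TS s"
  shows "\<alpha> # s \<in> NN D"
proof (cases \<alpha>)
  case (Act A ys)
  then show ?thesis using assms(1) by (auto simp: NN_def Let_def)
next
  case (Wait t)
  have "\<forall>w\<in>clock_terms D. val D s w \<ge> 0" using assms(1) by (auto simp: NN_def val_def)
  then have "\<forall>\<tau>\<in>TS (val D s) K. \<tau> \<ge> 0" using assms(2) unfolding tsuccs_ok_def by blast
  moreover have "t \<in> TS (val D s) K" using assms(3) Wait by (auto simp: Acts_def)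
  ultimately show ?thesis using assms(1) Wait by (auto simp: NN_def Let_def add_nonneg_nonneg)
qed

definition rd :: "nat \<Rightarrow> real \<Rightarrow> bool \<times> int \<times> int" where
  "rd K u = (if u > real K then (True,0,0) else (False, \<lfloor>u\<rfloor>, \<lceil>u\<rceil>))"

lemma rd_simK: "rd K u = rd K u' \<Longrightarrow> simK K u v = simK K u' v"
proof (cases "u > real K")
  case True
  assume a: "rd K u = rd K u'"
  then have "u' > real K" using True unfolding rd_def by (auto split: if_splits)
  then show ?thesis using True unfolding simK_def by auto
next
  case False
  assume a: "rd K u = rd K u'"
  then have "\<not> u' > real K" "\<lfloor>u\<rfloor> = \<lfloor>u'\<rfloor>" "\<lceil>u\<rceil> = \<lceil>u'\<rceil>" using False unfolding rd_def by (auto split: if_splits)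
  then show ?thesis using False unfolding simK_def by auto
qed

definition RA :: "('o,'f,'g,'a) bat \<Rightarrow> ('f \<times> 'o list) set" where
  "RA D = {(F,os). length os = rarity D F}"

definition sig where
  "sig D K s = (restrict (\<lambda>(F,os). frel (state_of D s) F os) (RA D),
                restrict (\<lambda>w. rd K (val D s w)) (clock_terms D),
                restrict (\<lambda>(w,w'). fractK K (val D s w) \<le> fractK K (val D s w')) (clock_terms D \<times> clock_terms D))"

lemma sig_sclass:
  assumes "sig D K s1 = sig D K s2"
  shows "sclass D K s1 = sclass D K s2"
proof -
  have e1: "restrict (\<lambda>(F,os). frel (state_of D s1) F os) (RA D) = restrict (\<lambda>(F,os). frel (state_of D s2) F os) (RA D)"
   and e2: "restrict (\<lambda>w. rd K (val D s1 w)) (clock_terms D) = restrict (\<lambda>w. rd K (val D s2 w)) (clock_terms D)"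
   and e3: "restrict (\<lambda>(w,w'). fractK K (val D s1 w) \<le> fractK K (val D s1 w')) (clock_terms D \<times> clock_terms D)
          = restrict (\<lambda>(w,w'). fractK K (val D s2 w) \<le> fractK K (val D s2 w')) (clock_terms D \<times> clock_terms D)"
    using assms unfolding sig_def by auto
  have R: "frel (state_of D s1) F os = frel (state_of D s2) F os" if "length os = rarity D F" for F os
  proof -
    have "(F,os) \<in> RA D" using that by (simp add: RA_def)
    then show ?thesis using fun_cong[OF e1, of "(F,os)"] by simp
  qed
  have C: "rd K (val D s1 w) = rd K (val D s2 w)" if "w \<in> clock_terms D" for w
    using fun_cong[OF e2, of w] that by simp
  have Fr: "(fractK K (val D s1 w) \<le> fractK K (val D s1 w')) = (fractK K (val D s2 w) \<le> fractK K (val D s2 w'))"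
    if "w \<in> clock_terms D" "w' \<in> clock_terms D" for w w'
    using fun_cong[OF e3, of "(w,w')"] that by simp
  have "sit_equiv D K s1 s' = sit_equiv D K s2 s'" for s'
  proof -
    have S: "\<forall>w\<in>clock_terms D. simK K (val D s1 w) x = simK K (val D s2 w) x" for x
      using C rd_simK by blast
    show ?thesis unfolding sit_equiv_def region_eq_def
      apply (rule arg_cong2[where f="(\<and>)"])
       apply (use R in blast)
      apply (rule arg_cong2[where f="(\<and>)"])
       apply (use S in blast)
      apply (use Fr in blast)
      done
  qed
  then show ?thesis unfolding sclass_def by auto
qed

lemma finite_RA: "finite (RA (D::('o::finite,'f::finite,'g,'a) bat))"
proof -
  have "RA D = (\<Union>F. (\<lambda>os. (F,os)) ` {os. length os = rarity D F})" unfolding RA_def by auto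
  moreover have "finite {os::'o list. length os = n}" for n
    using finite_lists_length_eq[of "UNIV::'o set" n] by simp
  ultimately show ?thesis by simp
qed

lemma finite_CT: "finite (clock_terms (D::('o::finite,'f,'g::finite,'a) bat))"
proof -
  have "clock_terms D = (\<Union>g. (\<lambda>os. (g,os)) ` {os. length os = farity D g})" unfolding clock_terms_def by auto
  moreover have "finite {os::'o list. length os = n}" for n
    using finite_lists_length_eq[of "UNIV::'o set" n] by simp
  ultimately show ?thesis by simp
qed

lemma rd_range: "u \<ge> 0 \<Longrightarrow> rd K u \<in> UNIV \<times> {0..int K} \<times> {0..int K}"
  unfolding rd_def using floor_mono[of u "real K"] by (auto simp: ceiling_le_iff le_floor_iff)

lemma t1: "finite (PiE (RA (D::('o::finite,'f::finite,'g::finite,'a) bat)) (\<lambda>_. (UNIV::bool set)))"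
  apply (rule finite_PiE)
  apply (rule finite_RA)
  apply simp
  done

lemma t2: "finite (PiE (clock_terms (D::('o::finite,'f::finite,'g::finite,'a) bat)) (\<lambda>_. (UNIV::bool set) \<times> {0..int K} \<times> {0..int K}))"
  apply (rule finite_PiE)
  apply (rule finite_CT)
  apply simp
  done

lemma t3: "finite (PiE (clock_terms (D::('o::finite,'f::finite,'g::finite,'a) bat) \<times> clock_terms D) (\<lambda>_. (UNIV::bool set)))"
  apply (rule finite_PiE)
  apply (rule finite_cartesian_product)
    apply (rule finite_CT)
   apply (rule finite_CT)
  apply simp
  done

lemma finite_sclass: "finite (sclass (D::('o::finite,'f::finite,'g::finite,'a) bat) K ` NN D)"
proof -
  let ?B = "PiE (RA D) (\<lambda>_. (UNIV::bool set)) \<times> PiE (clock_terms D) (\<lambda>_. (UNIV::bool set) \<times> {0..int K} \<times> {0..int K})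
           \<times> PiE (clock_terms D \<times> clock_terms D) (\<lambda>_. (UNIV::bool set))"
  have fB: "finite ?B" 
    by (rule finite_cartesian_product[OF t1 finite_cartesian_product[OF t2 t3]])
  have "sig D K ` NN D \<subseteq> ?B"
  proof
    fix x assume "x \<in> sig D K ` NN D"
    then obtain s where s: "s \<in> NN D" "x = sig D K s" by auto
    have "\<forall>w. val D s w \<ge> 0" using s(1) by (auto simp: NN_def val_def)
    then have "\<forall>w\<in>clock_terms D. rd K (val D s w) \<in> (UNIV::bool set) \<times> {0..int K} \<times> {0..int K}"
      using rd_range by blast
    then show "x \<in> ?B" unfolding s(2) sig_def
      by (simp only: mem_Times_iff fst_conv snd_conv restrict_PiE_iff) simp
  qed
  then have f: "finite (sig D K ` NN D)" using fB finite_subset by blast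
  define h where "h \<sigma> = sclass D K (SOME s. s \<in> NN D \<and> sig D K s = \<sigma>)" for \<sigma>
  have hs: "sclass D K s = h (sig D K s)" if "s \<in> NN D" for s
  proof -
    have ex: "\<exists>s'. s' \<in> NN D \<and> sig D K s' = sig D K s" using that by blast
    have "sig D K (SOME s'. s' \<in> NN D \<and> sig D K s' = sig D K s) = sig D K s"
      using someI_ex[OF ex] by blast
    then have "sclass D K (SOME s'. s' \<in> NN D \<and> sig D K s' = sig D K s) = sclass D K s"
      by (rule sig_sclass)
    then show ?thesis unfolding h_def by simp
  qed
  have eq: "sclass D K ` NN D = h ` sig D K ` NN D"
    unfolding image_image by (rule image_cong[OF refl hs])
  have "finite (h ` sig D K ` NN D)" using f by (rule finite_imageI)
  then show ?thesis unfolding eq .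
qed

lemma succ_props:
  assumes "s \<in> NN D" "tsuccs_ok D K TS" "(s', d') \<in> Succs D K TS s d"
  shows "s' \<in> NN D \<and> reachp d' \<subseteq> reachp d"
proof -
  obtain \<alpha> where a: "\<alpha> \<in> Acts D K TS s" "Trans D d s \<alpha> d' s'"
    using assms(3) unfolding Succs_def by blast
  from Trans_reachp[OF a(2)] have "reachp d' \<subseteq> reachp d" "s' = \<alpha> # s" by auto
  then show ?thesis using succ_NN[OF assms(1,2) a(1)] by simp
qed

definition inv_cfg where
  "inv_cfg D K d0 c = (case c of (Op, V, E) \<Rightarrow>
     (\<forall>p\<in>Op. fst p \<in> NN D \<and> reachp (snd p) \<subseteq> reachp d0) \<and>
     V \<subseteq> sclass D K ` NN D \<times> reachp d0)"

lemma inv_step: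
  assumes "alg_step D K TS c c'" "inv_cfg D K d0 c" "tsuccs_ok D K TS"
  shows "inv_cfg D K d0 c'"
proof -
  obtain Op V E where c: "c = (Op, V, E)" by (cases c) auto
  obtain Op' V' E' where c': "c' = (Op', V', E')" by (cases c') auto
  obtain s d R where st: "(s, d) \<in> Op" "R \<subseteq> Succs D K TS s d"
      "Op' = (Op - {(s, d)}) \<union> R" "V' = V \<union> absq D K ` R"
    using assms(1) unfolding c c' alg_step_def by auto
  have I1: "\<forall>p\<in>Op. fst p \<in> NN D \<and> reachp (snd p) \<subseteq> reachp d0"
   and I2: "V \<subseteq> sclass D K ` NN D \<times> reachp d0"
    using assms(2) unfolding c inv_cfg_def by auto
  have sN: "s \<in> NN D" and sd: "reachp d \<subseteq> reachp d0" using bspec[OF I1 st(1)] by auto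
  have R: "fst p \<in> NN D \<and> reachp (snd p) \<subseteq> reachp d0" if "p \<in> R" for p
  proof -
    obtain s' d' where p: "p = (s', d')" by (cases p) auto
    have "(s', d') \<in> Succs D K TS s d" using st(2) that p by auto
    from succ_props[OF sN assms(3) this] sd show ?thesis unfolding p by auto
  qed
  have "absq D K p \<in> sclass D K ` NN D \<times> reachp d0" if "p \<in> R" for p
  proof -
    obtain s' d' where p: "p = (s', d')" by (cases p) auto
    have "d' \<in> reachp d0" using R[OF that] reachp_self[of d'] unfolding p by auto
    then show ?thesis using R[OF that] unfolding p absq_def by auto
  qed
  then have "absq D K ` R \<subseteq> sclass D K ` NN D \<times> reachp d0" by blast
  then have "V' \<subseteq> sclass D K ` NN D \<times> reachp d0" using I2 st(4) by (simp only: Un_subset_iff)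
  moreover have "\<forall>p\<in>Op'. fst p \<in> NN D \<and> reachp (snd p) \<subseteq> reachp d0"
    using I1 R st(3) by auto
  ultimately show ?thesis unfolding c' inv_cfg_def by simp
qed

lemma inv_reach:
  assumes "(alg_step D K TS)\<^sup>*\<^sup>* (init_config d0) c" "tsuccs_ok D K TS"
  shows "inv_cfg D K d0 c"
  using assms(1)
proof (induction rule: rtranclp_induct)
  case base
  have "[] \<in> NN D" by (simp add: NN_def)
  then show ?case unfolding init_config_def inv_cfg_def by (simp add: reachp_self)
next
  case (step y z)
  then show ?case using inv_step assms(2) by blast
qed

theorem lemma9:
  fixes D :: "('o::finite, 'f::finite, 'g::finite, 'a::finite) bat"
    and d0 :: "('o, 'f, 'g, 'a) prog"
    and K :: nat
    and TS :: "('g \<times> 'o list \<Rightarrow> real) \<Rightarrow> nat \<Rightarrow> real set"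
  assumes "clocked_bat D"
    and "wf_prog D d0"
    and "\<forall>v\<in>bat_consts D. v \<le> K"
    and "tsuccs_ok D K TS"
  shows "finite (alg_states D K TS d0)"
proof -
  have "alg_states D K TS d0 \<subseteq> insert (sclass D K [], d0) (sclass D K ` NN D \<times> reachp d0)"
  proof
    fix x assume "x \<in> alg_states D K TS d0"
    then consider "x = (sclass D K [], d0)"
      | Op V E where "(alg_step D K TS)\<^sup>*\<^sup>* (init_config d0) (Op, V, E)" "x \<in> V"
      unfolding alg_states_def by blast
    then show "x \<in> insert (sclass D K [], d0) (sclass D K ` NN D \<times> reachp d0)"
    proof cases
      case 1 then show ?thesis by simp
    next
      case (2 Op V E)
      from inv_reach[OF 2(1) assms(4)] 2(2) show ?thesis unfolding inv_cfg_def by auto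
    qed
  qed
  moreover have "finite (sclass D K ` NN D \<times> reachp d0)"
    using finite_sclass reachp_finite by (rule finite_cartesian_product)
  ultimately show ?thesis using finite_subset by blast
qed


end
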